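(* Let $n\ge s\ge 1$ and $\ell\ge 1$ be integers, and let $Q=\operatorname{diag}(Q_s, I_{n-s})$ be an $n\times n$ block diagonal matrix, where $Q_s$ is a rational orthogonal matrix of order $s$ and level $\ell$ each of whose entries is either $0$ or a non-integer rational number, and $I_{n-s}$ is the identity matrix of order $n-s$. Let $0<p<1$ and let $A$ be the adjacency matrix of a random graph $G\sim\mathcal{G}(n,p)$. Then $$\Pr\big(Q^\top A Q \text{ is an integer matrix}\big)\le \hat p^{\,\frac{s}{2\ell^4}\left(\frac{s}{2\ell^4}+n-s-1\right)},$$ where $\hat p=\max\{p,1-p\}$.
   Context: $\mathcal{G}(n,p)$ is the random graph on $n$ labelled vertices in which each possible edge is present independently with probability $p$; its adjacency matrix has $(i,j)$ entry $1$ if $ij$ is an edge and $0$ otherwise. The level of a rational matrix $M$ is the smallest positive integer $\ell$ such that $\ell M$ has integer entries. A rational orthogonal matrix is a matrix with rational entries satisfying $Q^\top Q=I$. *)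

theory Defs
  imports "HOL-Probability.Probability"
begin

definition edge_slots :: "nat \<Rightarrow> (nat \<times> nat) set" where
  "edge_slots n = {(i, j). i < j \<and> j < n}"

text \<open>The random graph G(n,p): each possible edge present independently with probability p.
  A graph is represented by its edge indicator function (False outside the edge slots).\<close>
definition gnp :: "nat \<Rightarrow> real \<Rightarrow> (nat \<times> nat \<Rightarrow> bool) pmf" where
  "gnp n p = Pi_pmf (edge_slots n) False (\<lambda>_. bernoulli_pmf p)"

definition adj_matrix :: "(nat \<times> nat \<Rightarrow> bool) \<Rightarrow> nat \<Rightarrow> nat \<Rightarrow> rat" where
  "adj_matrix G i j = (if i \<noteq> j \<and> G (min i j, max i j) then 1 else 0)"

definition int_matrix :: "nat \<Rightarrow> (nat \<Rightarrow> nat \<Rightarrow> rat) \<Rightarrow> bool" where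
  "int_matrix m M \<longleftrightarrow> (\<forall>i<m. \<forall>j<m. M i j \<in> \<int>)"

definition rat_orthogonal :: "nat \<Rightarrow> (nat \<Rightarrow> nat \<Rightarrow> rat) \<Rightarrow> bool" where
  "rat_orthogonal m Q \<longleftrightarrow>
     (\<forall>i<m. \<forall>j<m. (\<Sum>k<m. Q k i * Q k j) = (if i = j then 1 else 0))"

definition level :: "nat \<Rightarrow> (nat \<Rightarrow> nat \<Rightarrow> rat) \<Rightarrow> nat" where
  "level m M = (LEAST l::nat. 0 < l \<and> int_matrix m (\<lambda>i j. of_nat l * M i j))"

definition block_diag_id :: "nat \<Rightarrow> (nat \<Rightarrow> nat \<Rightarrow> rat) \<Rightarrow> nat \<Rightarrow> nat \<Rightarrow> rat" where
  "block_diag_id s Qs i j =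
     (if i < s \<and> j < s then Qs i j else if i = j then 1 else 0)"

definition congr :: "nat \<Rightarrow> (nat \<Rightarrow> nat \<Rightarrow> rat) \<Rightarrow> (nat \<Rightarrow> nat \<Rightarrow> rat) \<Rightarrow> nat \<Rightarrow> nat \<Rightarrow> rat" where
  "congr n Q A i j = (\<Sum>k<n. \<Sum>m<n. Q k i * A k m * Q m j)"

end

theory Submission
  imports Defs "Jordan_Normal_Form.Determinant"
begin

lemma bern_le: "0 < p \<Longrightarrow> p < 1 \<Longrightarrow> pmf (bernoulli_pmf p) b \<le> max p (1 - p)"
  by (cases b) auto

lemma prob_unique_bound:
  fixes D F :: "'a set" and E :: "('a \<Rightarrow> bool) set" and p :: real
  assumes D: "finite D" and FD: "F \<subseteq> D" and p: "0 < p" "p < 1"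
  and uniq: "\<And>G G'. G \<in> E \<Longrightarrow> G' \<in> E \<Longrightarrow> (\<forall>x. x \<notin> D \<longrightarrow> G x = False) \<Longrightarrow>
     (\<forall>x. x \<notin> D \<longrightarrow> G' x = False) \<Longrightarrow> (\<forall>x. x \<notin> F \<longrightarrow> G x = G' x) \<Longrightarrow> G = G'"
  shows "measure_pmf.prob (Pi_pmf D False (\<lambda>_. bernoulli_pmf p)) E \<le> max p (1-p) ^ card F"
proof -
  define X where "X = Pi_pmf D False (\<lambda>_. bernoulli_pmf p)"
  define Y where "Y = Pi_pmf (D - F) False (\<lambda>_. bernoulli_pmf p)"
  define q where "q = max p (1-p)"
  define S where "S = E \<inter> set_pmf X"
  define r where "r = (\<lambda>G x. if x \<in> D - F then G x else False)"
  have FF: "finite F" using D FD finite_subset by blast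
  have sX: "set_pmf X \<subseteq> {f. \<forall>x. x \<notin> D \<longrightarrow> f x = False}"
    unfolding X_def by (rule set_Pi_pmf_subset[OF D])
  have "set_pmf X \<subseteq> PiE_dflt D False (set_pmf \<circ> (\<lambda>_. bernoulli_pmf p))"
    unfolding X_def by (rule set_Pi_pmf_subset'[OF D])
  moreover have "finite (PiE_dflt D False (set_pmf \<circ> (\<lambda>_. bernoulli_pmf p)))"
    using D by (intro finite_PiE_dflt) auto
  ultimately have finX: "finite (set_pmf X)" using finite_subset by blast
  have finS: "finite S" unfolding S_def using finX by auto
  have "measure_pmf.prob X E = measure_pmf.prob X S"
    unfolding S_def by (simp add: measure_Int_set_pmf)
  also have "\<dots> = (\<Sum>G\<in>S. pmf X G)" using finS by (simp add: measure_measure_pmf_finite)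
  also have "\<dots> \<le> (\<Sum>G\<in>S. q ^ card F * pmf Y (r G))"
  proof (rule sum_mono)
    fix G assume G: "G \<in> S"
    hence G0: "\<forall>x. x \<notin> D \<longrightarrow> G x = False" using sX S_def by blast
    have e1: "pmf X G = (\<Prod>x\<in>D. pmf (bernoulli_pmf p) (G x))"
      unfolding X_def using G0 by (simp add: pmf_Pi[OF D])
    have e2: "(\<Prod>x\<in>D. pmf (bernoulli_pmf p) (G x)) = (\<Prod>x\<in>D - F. pmf (bernoulli_pmf p) (G x)) * (\<Prod>x\<in>F. pmf (bernoulli_pmf p) (G x))"
      using prod.subset_diff[OF FD D] by simp
    have e3: "(\<Prod>x\<in>F. pmf (bernoulli_pmf p) (G x)) \<le> (\<Prod>x\<in>F. q)"
      by (rule prod_mono) (use p bern_le in \<open>auto simp: q_def\<close>)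
    have e4: "(\<Prod>x\<in>F. q) = q ^ card F" by simp
    have e5: "(\<Prod>x\<in>D - F. pmf (bernoulli_pmf p) (G x)) = pmf Y (r G)"
      unfolding Y_def using D by (auto simp: pmf_Pi r_def intro!: prod.cong)
    have "0 \<le> pmf Y (r G)" by simp
    then show "pmf X G \<le> q ^ card F * pmf Y (r G)"
      using e1 e2 e3 e4 e5 by (metis mult.commute mult_left_mono)
  qed
  also have "\<dots> = q ^ card F * (\<Sum>G\<in>S. pmf Y (r G))" by (simp add: sum_distrib_left)
  also have "(\<Sum>G\<in>S. pmf Y (r G)) = (\<Sum>H\<in>r ` S. pmf Y H)"
  proof -
    have "inj_on r S"
    proof (rule inj_onI)
      fix G G' assume G: "G \<in> S" and G': "G' \<in> S" and eq: "r G = r G'"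
      have G0: "\<forall>x. x \<notin> D \<longrightarrow> G x = False" and G0': "\<forall>x. x \<notin> D \<longrightarrow> G' x = False"
        using G G' sX S_def by blast+
      have "\<forall>x. x \<notin> F \<longrightarrow> G x = G' x"
      proof (intro allI impI)
        fix x assume "x \<notin> F"
        show "G x = G' x"
        proof (cases "x \<in> D")
          case True
          then show ?thesis using \<open>x \<notin> F\<close> fun_cong[OF eq, of x] by (simp add: r_def)
        qed (use G0 G0' in auto)
      qed
      then show "G = G'" using uniq G G' G0 G0' S_def by blast
    qed
    then show ?thesis by (simp add: sum.reindex)
  qed
  also have "\<dots> = measure_pmf.prob Y (r ` S)" using finS by (simp add: measure_measure_pmf_finite)
  also have "q ^ card F * \<dots> \<le> q ^ card F * 1"
    by (rule mult_left_mono) (auto simp: q_def)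
  finally show ?thesis by (simp add: X_def q_def)
qed


lemma greedy_indep:
  fixes V :: "'a set" and R :: "'a \<Rightarrow> 'a \<Rightarrow> bool" and d :: nat
  assumes "finite V" "\<forall>i\<in>V. R i i" "\<forall>i j. R i j \<longrightarrow> R j i" "\<forall>i\<in>V. card {j\<in>V. R i j} \<le> d"
  shows "\<exists>I\<subseteq>V. (\<forall>i\<in>I. \<forall>j\<in>I. i \<noteq> j \<longrightarrow> \<not> R i j) \<and> card V \<le> d * card I"
  using assms
proof (induction "card V" arbitrary: V rule: less_induct)
  case less
  show ?case
  proof (cases "V = {}")
    case True
    then show ?thesis by auto
  next
    case False
    then obtain v where v: "v \<in> V" by auto
    define V' where "V' = V - {j\<in>V. R v j}"
    have sub: "V' \<subseteq> V" unfolding V'_def by auto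
    have vV': "v \<notin> V'" using v less.prems(2) unfolding V'_def by auto
    have fin': "finite V'" using less.prems(1) sub finite_subset by blast
    have lt: "card V' < card V" using v vV' sub less.prems(1) by (intro psubset_card_mono) auto
    have ex: "\<exists>I\<subseteq>V'. (\<forall>i\<in>I. \<forall>j\<in>I. i \<noteq> j \<longrightarrow> \<not> R i j) \<and> card V' \<le> d * card I"
    proof -
      have a2: "\<forall>i\<in>V'. R i i" using less.prems(2) sub by blast
      have a4: "\<forall>i\<in>V'. card {j\<in>V'. R i j} \<le> d"
      proof
        fix i assume "i \<in> V'"
        have "card {j\<in>V'. R i j} \<le> card {j\<in>V. R i j}"
          by (rule card_mono) (use less.prems(1) sub in auto)
        then show "card {j\<in>V'. R i j} \<le> d" using less.prems(4) \<open>i \<in> V'\<close> sub by fastforce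
      qed
      show ?thesis using less.hyps[OF lt fin' a2 less.prems(3) a4] .
    qed
    obtain I' where I': "I' \<subseteq> V'" "\<forall>i\<in>I'. \<forall>j\<in>I'. i \<noteq> j \<longrightarrow> \<not> R i j" "card V' \<le> d * card I'"
      using ex by blast
    define I where "I = insert v I'"
    have W: "{j\<in>V. R v j} \<subseteq> V" "finite {j\<in>V. R v j}" using less.prems(1) by auto
    have "card V' = card V - card {j\<in>V. R v j}"
      unfolding V'_def using card_Diff_subset[OF W(2) W(1)] .
    moreover have "card {j\<in>V. R v j} \<le> card V" using card_mono[OF less.prems(1) W(1)] .
    ultimately have "card V = card V' + card {j\<in>V. R v j}" by linarith
    also have "\<dots> \<le> d * card I' + d" using I'(3) less.prems(4) v by auto
    also have "\<dots> = d * card I" unfolding I_def using vV' I'(1) fin' finite_subset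
      by (subst card_insert_disjoint) auto
    finally have c: "card V \<le> d * card I" .
    have "I \<subseteq> V" unfolding I_def using I'(1) sub v by auto
    moreover have "\<forall>i\<in>I. \<forall>j\<in>I. i \<noteq> j \<longrightarrow> \<not> R i j"
    proof (intro ballI impI)
      fix i j assume i: "i \<in> I" and j: "j \<in> I" and ij: "i \<noteq> j"
      show "\<not> R i j"
      proof (cases "i = v")
        case True
        then have "j \<in> I'" using j ij I_def by auto
        then have "j \<in> V'" using I'(1) by auto
        then show ?thesis using True unfolding V'_def by auto
      next
        case False
        then have iI: "i \<in> I'" using i I_def by auto
        show ?thesis
        proof (cases "j = v")
          case True
          then have "\<not> R v i" using iI I'(1) unfolding V'_def by auto
          then show ?thesis using True less.prems(3) by blast
        next
          case False
          then show ?thesis using iI j ij I_def I'(2) by auto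
        qed
      qed
    qed
    ultimately show ?thesis using c by blast
  qed
qed

lemma orth_rows:
  assumes "rat_orthogonal s Q" "i < s" "j < s"
  shows "(\<Sum>k<s. Q i k * Q j k) = (if i = j then 1 else 0)"
proof -
  define M where "M = mat s s (\<lambda>(i,j). Q i j)"
  have M: "M \<in> carrier_mat s s" unfolding M_def by simp
  have "transpose_mat M * M = 1\<^sub>m s"
    by (rule eq_matI) (use assms(1) in \<open>auto simp: M_def scalar_prod_def rat_orthogonal_def lessThan_atLeast0\<close>)
  then have "M * transpose_mat M = 1\<^sub>m s"
    using mat_mult_left_right_inverse[of "transpose_mat M" s M] M by auto
  then have "(M * transpose_mat M) $$ (i,j) = 1\<^sub>m s $$ (i,j)" by simp
  then show ?thesis using assms(2,3) by (simp add: M_def scalar_prod_def lessThan_atLeast0)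
qed

lemma common_denom_set:
  fixes X :: "rat set"
  assumes "finite X"
  shows "\<exists>l::nat. 0 < l \<and> (\<forall>x\<in>X. of_nat l * x \<in> \<int>)"
  using assms
proof (induction X rule: finite_induct)
  case empty
  then show ?case by (intro exI[of _ 1]) auto
next
  case (insert x X)
  then obtain l :: nat where l: "0 < l" "\<forall>y\<in>X. of_nat l * y \<in> \<int>" by blast
  obtain a b where ab: "quotient_of x = (a, b)" by (cases "quotient_of x")
  have b: "b > 0" using quotient_of_denom_pos[OF ab] .
  have xab: "x = of_int a / of_int b" using quotient_of_div[OF ab] .
  define l' where "l' = l * nat b"
  have "0 < l'" using l b unfolding l'_def by simp
  moreover have "\<forall>y\<in>insert x X. of_nat l' * y \<in> \<int>"
  proof
    fix y assume "y \<in> insert x X"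
    then show "of_nat l' * y \<in> \<int>"
    proof
      assume "y = x"
      have "of_nat l' * y = of_nat l * of_int a"
        using b \<open>y = x\<close> xab unfolding l'_def by (simp add: field_simps)
      then show ?thesis by simp
    next
      assume "y \<in> X"
      then have "of_nat l * y \<in> \<int>" using l by blast
      moreover have "of_nat l' * y = of_int b * (of_nat l * y)"
      proof -
        have "(of_nat (nat b)::rat) = of_int b" using b by simp
        then show ?thesis unfolding l'_def by (simp only: of_nat_mult) (simp add: algebra_simps)
      qed
      moreover have "of_int b * (of_nat l * y) \<in> \<int>" by (rule Ints_mult[OF Ints_of_int \<open>of_nat l * y \<in> \<int>\<close>])
      ultimately show ?thesis by (simp only:)
    qed
  qed
  ultimately show ?case by blast
qed

lemma level_int:
  assumes "level s Q = l"
  shows "0 < l" "\<forall>i<s. \<forall>j<s. of_nat l * Q i j \<in> \<int>"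
proof -
  have "finite ((\<lambda>(i,j). Q i j) ` ({..<s} \<times> {..<s}))" by simp
  from common_denom_set[OF this] obtain l0 :: nat where
    l0: "0 < l0" "\<forall>x\<in>(\<lambda>(i,j). Q i j) ` ({..<s} \<times> {..<s}). of_nat l0 * x \<in> \<int>" by blast
  have ex: "\<exists>l. 0 < l \<and> int_matrix s (\<lambda>i j. of_nat l * Q i j)"
    using l0 unfolding int_matrix_def by (intro exI[of _ l0]) auto
  have "0 < level s Q \<and> int_matrix s (\<lambda>i j. of_nat (level s Q) * Q i j)"
    unfolding level_def by (rule LeastI_ex[OF ex])
  then show "0 < l" "\<forall>i<s. \<forall>j<s. of_nat l * Q i j \<in> \<int>"
    using assms unfolding int_matrix_def by auto
qed

lemma supp_bound:
  fixes v :: "nat \<Rightarrow> rat" and l :: nat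
  assumes "(\<Sum>k<s. v k * v k) = 1" "0 < l" "\<forall>k<s. of_nat l * v k \<in> \<int>"
  shows "card {k. k < s \<and> v k \<noteq> 0} \<le> l ^ 2"
proof -
  define S where "S = {k. k < s \<and> v k \<noteq> 0}"
  have finS: "finite S" unfolding S_def by simp
  have ge1: "1 \<le> (of_nat l * v k) * (of_nat l * v k)" if "k \<in> S" for k
  proof -
    have "of_nat l * v k \<in> \<int>" using assms(3) that unfolding S_def by auto
    then obtain z where z: "of_nat l * v k = of_int z" by (rule Ints_cases)
    have "z \<noteq> 0" using z assms(2) that unfolding S_def by auto
    then have "1 \<le> \<bar>z\<bar>" by linarith
    then have "1 * 1 \<le> \<bar>z\<bar> * \<bar>z\<bar>" by (intro mult_mono) auto
    then have "1 \<le> z * z" by (simp add: abs_mult_self_eq)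
    then have "(of_int 1::rat) \<le> of_int (z * z)" by (simp only: of_int_le_iff)
    then have "(1::rat) \<le> of_int z * of_int z" by simp
    then show ?thesis using z by simp
  qed
  have "of_nat (card S) = (\<Sum>k\<in>S. (1::rat))" by simp
  also have "\<dots> \<le> (\<Sum>k\<in>S. (of_nat l * v k) * (of_nat l * v k))"
    by (rule sum_mono) (use ge1 in auto)
  also have "\<dots> \<le> (\<Sum>k<s. (of_nat l * v k) * (of_nat l * v k))"
    by (rule sum_mono2) (auto simp: S_def)
  also have "\<dots> = of_nat l * of_nat l * (\<Sum>k<s. v k * v k)"
    by (simp add: sum_distrib_left algebra_simps)
  also have "\<dots> = of_nat (l ^ 2)" using assms(1) by (simp add: power2_eq_square)
  finally show ?thesis unfolding S_def by (simp only: of_nat_le_iff)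
qed

lemma prod_not_int:
  fixes a b :: rat
  assumes "a \<noteq> 0" "b \<noteq> 0" "\<bar>a\<bar> < 1" "\<bar>b\<bar> < 1"
  shows "a * b \<notin> \<int>"
proof
  assume "a * b \<in> \<int>"
  then obtain z where z: "a * b = of_int z" by (auto elim: Ints_cases)
  have "\<bar>a\<bar> * \<bar>b\<bar> < 1 * 1" using assms by (intro mult_strict_mono) auto
  then have "\<bar>a * b\<bar> < 1" by (simp only: abs_mult mult_1_right)
  then have lt: "\<bar>of_int z\<bar> < (1::rat)" by (subst z[symmetric])
  have "\<bar>z\<bar> < 1"
  proof -
    have "of_int \<bar>z\<bar> < (of_int 1 :: rat)" using lt by simp
    then show ?thesis by (simp only: of_int_less_iff)
  qed
  then have "z = 0" by linarith
  then show False using z assms(1,2) by simp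
qed

lemma abs_lt1:
  fixes a :: rat
  assumes "a * a \<le> 1" "a \<notin> \<int>"
  shows "\<bar>a\<bar> < 1"
proof (rule ccontr)
  assume "\<not> \<bar>a\<bar> < 1"
  then have "1 \<le> \<bar>a\<bar>" by simp
  have "\<bar>a\<bar> * 1 \<le> \<bar>a\<bar> * \<bar>a\<bar>" using \<open>1 \<le> \<bar>a\<bar>\<close> by (intro mult_left_mono) auto
  also have "\<bar>a\<bar> * \<bar>a\<bar> = a * a" by (simp add: abs_mult_self_eq)
  finally have "\<bar>a\<bar> \<le> 1" using assms(1) by simp
  then have "\<bar>a\<bar> = 1" using \<open>1 \<le> \<bar>a\<bar>\<close> by simp
  then have "a = 1 \<or> a = -1" by auto
  then show False using assms(2) by auto
qed

lemma sum_single: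
  assumes "finite A" "i \<in> A" "\<forall>k\<in>A. k \<noteq> i \<longrightarrow> f k = 0"
  shows "sum f A = f i"
proof -
  have "sum f A = f i + sum f (A - {i})" using assms(1,2) by (simp add: sum.remove)
  also have "sum f (A - {i}) = 0" using assms(3) by (intro sum.neutral) auto
  finally show ?thesis by simp
qed

lemma card_upper_pairs:
  fixes I :: "nat set"
  assumes "finite I"
  shows "2 * card {(i,j). i \<in> I \<and> j \<in> I \<and> i < j} + card I = card I * card I"
proof -
  define U where "U = {(i,j). i \<in> I \<and> j \<in> I \<and> i < j}"
  define L where "L = {(i,j). i \<in> I \<and> j \<in> I \<and> j < i}"
  define Dg where "Dg = {(i,j). i \<in> I \<and> j \<in> I \<and> i = j}"
  have fin: "finite (I \<times> I)" using assms by simp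
  have UL: "I \<times> I = U \<union> L \<union> Dg" unfolding U_def L_def Dg_def by auto
  have fU: "finite U" "finite L" "finite Dg" using fin unfolding U_def L_def Dg_def
    by (auto intro: finite_subset[OF _ fin])
  have "L = prod.swap ` U" unfolding L_def U_def by auto
  then have cL: "card L = card U" by (simp add: card_image)
  have "Dg = (\<lambda>i. (i,i)) ` I" unfolding Dg_def by auto
  then have cD: "card Dg = card I" by (simp add: card_image inj_on_def)
  have "card (I \<times> I) = card (U \<union> L) + card Dg"
    unfolding UL by (rule card_Un_disjoint) (use fU in \<open>auto simp: U_def L_def Dg_def\<close>)
  also have "card (U \<union> L) = card U + card L"
    by (rule card_Un_disjoint) (use fU in \<open>auto simp: U_def L_def\<close>)
  finally show ?thesis using cL cD unfolding U_def by (simp add: card_cartesian_product)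
qed

lemma double_single:
  fixes f :: "nat \<Rightarrow> nat \<Rightarrow> rat"
  assumes a: "a < n" and b: "b < n" and nz: "\<And>k m. k < n \<Longrightarrow> m < n \<Longrightarrow> f k m \<noteq> 0 \<Longrightarrow> k = a \<and> m = b"
  shows "(\<Sum>k<n. \<Sum>m<n. f k m) = f a b"
proof -
  have z: "(\<Sum>m<n. f k m) = 0" if "k < n" "k \<noteq> a" for k
  proof (rule sum.neutral, rule ballI)
    fix m assume "m \<in> {..<n}"
    then show "f k m = 0" using nz[of k m] that by blast
  qed
  have "(\<Sum>k<n. \<Sum>m<n. f k m) = (\<Sum>m<n. f a m)"
    by (rule sum_single) (use a z in auto)
  also have "\<dots> = f a b"
  proof (rule sum_single)
    show "\<forall>k\<in>{..<n}. k \<noteq> b \<longrightarrow> f a k = 0" using nz a by blast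
  qed (use b in auto)
  finally show ?thesis .
qed

lemma lin1: "(X::real) \<le> Z \<Longrightarrow> Z = Y / 4 - r / 2 \<Longrightarrow> 0 \<le> Y \<Longrightarrow> X \<le> (Y - r) / 2"
  by simp

lemma lin2: "(X::real) = Y + Z \<Longrightarrow> Z \<le> U \<Longrightarrow> Y \<le> V \<Longrightarrow> X \<le> V + U"
  by simp

lemma final_ineq:
  fixes s l m n :: nat and t :: real
  assumes "1 \<le> m" "0 \<le> t" "t \<le> real m / 2" "s \<le> n"
  shows "t * (t + real n - real s - 1) \<le> (real m * real m - real m) / 2 + real m * (real n - real s)"
proof -
  have N: "0 \<le> real n - real s" using assms(4) by simp
  have m1: "1 \<le> real m" using assms(1) by simp
  have A: "t * (real n - real s) \<le> real m * (real n - real s)"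
    by (rule mult_right_mono) (use assms(3) m1 N in auto)
  have B: "t * (t - 1) \<le> (real m * real m - real m) / 2"
  proof (cases "t \<le> 1")
    case True
    then have "t * (t - 1) \<le> 0" using assms(2) by (simp add: mult_nonneg_nonpos)
    moreover have "real m * 1 \<le> real m * real m" using m1 by (intro mult_left_mono) auto
    then have "real m \<le> real m * real m" by simp
    then have "0 \<le> (real m * real m - real m) / 2" by simp
    ultimately show ?thesis by (rule order_trans)
  next
    case False
    have "t * (t - 1) \<le> (real m / 2) * (real m / 2 - 1)"
      by (rule mult_mono) (use assms False in auto)
    moreover have "(real m / 2) * (real m / 2 - 1) = real m * real m / 4 - real m / 2"
      by (simp add: algebra_simps)
    moreover have "0 \<le> real m * real m" by simp
    ultimately show ?thesis by (rule lin1)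
  qed
  have "t * (t + real n - real s - 1) = t * (t - 1) + t * (real n - real s)"
    by (simp add: algebra_simps)
  then show ?thesis using A B by (rule lin2)
qed

theorem mainTheorem2:
  fixes n s l :: nat and Qs :: "nat \<Rightarrow> nat \<Rightarrow> rat" and p :: real
  assumes "1 \<le> s" and "s \<le> n" and "1 \<le> l"
    and "rat_orthogonal s Qs"
    and "level s Qs = l"
    and "\<forall>i<s. \<forall>j<s. Qs i j = 0 \<or> Qs i j \<notin> \<int>"
    and "0 < p" and "p < 1"
  shows "measure_pmf.prob (gnp n p)
           {G. int_matrix n (congr n (block_diag_id s Qs) (adj_matrix G))}
         \<le> max p (1 - p) powr
             (real s / (2 * real l ^ 4) * (real s / (2 * real l ^ 4) + real n - real s - 1))"
proof -
  define Q where "Q = block_diag_id s Qs"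
  define E where "E = {G. int_matrix n (congr n Q (adj_matrix G))}"
  have l0: "0 < l" and lint: "\<forall>i<s. \<forall>j<s. of_nat l * Qs i j \<in> \<int>"
    using level_int[OF assms(5)] by auto
  have colnorm: "(\<Sum>k<s. Qs k c * Qs k c) = 1" if "c < s" for c
    using assms(4) that unfolding rat_orthogonal_def by auto
  have rownorm: "(\<Sum>k<s. Qs i k * Qs i k) = 1" if "i < s" for i
    using orth_rows[OF assms(4) that that] by simp
  have entry_lt1: "\<bar>Qs k c\<bar> < 1" if "k < s" "c < s" "Qs k c \<noteq> 0" for k c
  proof (rule abs_lt1)
    have "Qs k c * Qs k c \<le> (\<Sum>k'<s. Qs k' c * Qs k' c)"
      by (rule member_le_sum) (use that in auto)
    then show "Qs k c * Qs k c \<le> 1" using colnorm[OF that(2)] by simp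
    show "Qs k c \<notin> \<int>" using assms(6) that by blast
  qed
  have rowsupp: "card {k. k < s \<and> Qs i k \<noteq> 0} \<le> l ^ 2" if "i < s" for i
    by (rule supp_bound[OF rownorm[OF that] l0]) (use lint that in auto)
  have colsupp: "card {k. k < s \<and> Qs k c \<noteq> 0} \<le> l ^ 2" if "c < s" for c
    by (rule supp_bound[where v="\<lambda>k. Qs k c", OF colnorm[OF that] l0]) (use lint that in auto)
  have rownz: "\<exists>c<s. Qs i c \<noteq> 0" if "i < s" for i
  proof (rule ccontr)
    assume "\<not> (\<exists>c<s. Qs i c \<noteq> 0)"
    then have "(\<Sum>k<s. Qs i k * Qs i k) = 0" by simp
    then show False using rownorm[OF that] by simp
  qed
  define R where "R = (\<lambda>i j. \<exists>c<s. Qs i c \<noteq> 0 \<and> Qs j c \<noteq> 0)"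
  have "\<exists>I\<subseteq>{..<s}. (\<forall>i\<in>I. \<forall>j\<in>I. i \<noteq> j \<longrightarrow> \<not> R i j) \<and> card {..<s} \<le> l ^ 4 * card I"
  proof (rule greedy_indep)
    show "\<forall>i\<in>{..<s}. R i i" using rownz unfolding R_def by auto
    show "\<forall>i j. R i j \<longrightarrow> R j i" unfolding R_def by auto
    show "\<forall>i\<in>{..<s}. card {j \<in> {..<s}. R i j} \<le> l ^ 4"
    proof
      fix i assume "i \<in> {..<s}"
      then have i: "i < s" by simp
      define Ri where "Ri = {c. c < s \<and> Qs i c \<noteq> 0}"
      have sub: "{j \<in> {..<s}. R i j} \<subseteq> (\<Union>c\<in>Ri. {k. k < s \<and> Qs k c \<noteq> 0})"
        unfolding R_def Ri_def by auto
      have finRi: "finite Ri" unfolding Ri_def by simp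
      have "card {j \<in> {..<s}. R i j} \<le> card (\<Union>c\<in>Ri. {k. k < s \<and> Qs k c \<noteq> 0})"
        by (rule card_mono) (use sub finRi in auto)
      also have "\<dots> \<le> (\<Sum>c\<in>Ri. card {k. k < s \<and> Qs k c \<noteq> 0})"
        by (rule card_UN_le[OF finRi])
      also have "\<dots> \<le> card Ri * l ^ 2"
        using sum_bounded_above[of Ri "\<lambda>c. card {k. k < s \<and> Qs k c \<noteq> 0}" "l ^ 2"] colsupp
        unfolding Ri_def by auto
      also have "\<dots> \<le> l ^ 2 * l ^ 2"
        using rowsupp[OF i] unfolding Ri_def by (intro mult_right_mono) auto
      also have "\<dots> = l ^ 4" by (simp add: power_add[symmetric])
      finally show "card {j \<in> {..<s}. R i j} \<le> l ^ 4" .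
    qed
  qed simp
  then obtain I where I: "I \<subseteq> {..<s}" "\<forall>i\<in>I. \<forall>j\<in>I. i \<noteq> j \<longrightarrow> \<not> R i j"
    "s \<le> l ^ 4 * card I" by auto
  have finI: "finite I" using I(1) finite_subset by blast
  define m where "m = card I"
  define F1 where "F1 = {(i,j). i \<in> I \<and> j \<in> I \<and> i < j}"
  define F2 where "F2 = I \<times> {s..<n}"
  define F where "F = F1 \<union> F2"
  have Ilt: "i < s" if "i \<in> I" for i using I(1) that by auto
  have FD: "F \<subseteq> edge_slots n"
    unfolding F_def F1_def F2_def edge_slots_def using Ilt assms(2) by fastforce
  have finD: "finite (edge_slots n)"
    by (rule finite_subset[of _ "{..<n} \<times> {..<n}"]) (auto simp: edge_slots_def)
  have indep: "i = k" if "i \<in> I" "k \<in> I" "c < s" "Qs i c \<noteq> 0" "Qs k c \<noteq> 0" for i k c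
    using I(2) that unfolding R_def by blast
  have Qc: "Q k c = (if k < s then Qs k c else 0)" if "c < s" for k c
    using that unfolding Q_def block_diag_id_def by auto
  have Qj: "Q k j = (if k = j then 1 else 0)" if "s \<le> j" for k j
    using that unfolding Q_def block_diag_id_def by auto
  have uniq: "G = G'" if GE: "G \<in> E" and GE': "G' \<in> E"
      and agree: "\<forall>x. x \<notin> F \<longrightarrow> G x = G' x" for G G'
  proof (rule ext, rule ccontr)
    fix x assume ne: "G x \<noteq> G' x"
    then have xF: "x \<in> F" using agree by blast
    obtain a b where x: "x = (a, b)" by (cases x)
    define Dm where "Dm = (\<lambda>u v. adj_matrix G u v - adj_matrix G' u v)"
    have cd: "congr n Q Dm u v \<in> \<int>" if "u < n" "v < n" for u v
    proof -
      have "congr n Q Dm u v = congr n Q (adj_matrix G) u v - congr n Q (adj_matrix G') u v"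
        unfolding congr_def Dm_def by (simp add: sum_subtractf[symmetric] algebra_simps)
      moreover have "congr n Q (adj_matrix G) u v \<in> \<int>" "congr n Q (adj_matrix G') u v \<in> \<int>"
        using GE GE' that unfolding E_def int_matrix_def by auto
      ultimately show ?thesis by simp
    qed
    have Dnz: "u \<noteq> v \<and> (min u v, max u v) \<in> F" if "Dm u v \<noteq> 0" for u v
    proof -
      have "u \<noteq> v" using that unfolding Dm_def adj_matrix_def by auto
      moreover have "G (min u v, max u v) \<noteq> G' (min u v, max u v)"
        using that unfolding Dm_def adj_matrix_def by (auto split: if_splits)
      ultimately show ?thesis using agree by blast
    qed
    have ab: "a < b" using xF unfolding x F_def F1_def F2_def by (force dest: Ilt)
    have Dab: "Dm a b = 1 \<or> Dm a b = -1"
      using ne ab unfolding x Dm_def adj_matrix_def by (auto simp: min_def max_def)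
    have bn: "b < n" using xF FD unfolding x edge_slots_def by auto
    show False
    proof (cases "x \<in> F2")
      case True
      then have aI: "a \<in> I" and sb: "s \<le> b" unfolding x F2_def by auto
      obtain c where c: "c < s" "Qs a c \<noteq> 0" using rownz[OF Ilt[OF aI]] by blast
      have "congr n Q Dm c b = Q a c * Dm a b * Q b b"
        unfolding congr_def
      proof (rule double_single)
        show "a < n" using Ilt[OF aI] assms(2) by simp
        show "b < n" by (rule bn)
        fix k m assume k: "k < n" and m: "m < n" and nz: "Q k c * Dm k m * Q m b \<noteq> 0"
        have mb: "m = b" using nz Qj[OF sb] by (auto split: if_splits)
        have ks: "k < s" and kc: "Qs k c \<noteq> 0" using nz Qc[OF c(1)] by (auto split: if_splits)
        have "(min k b, max k b) \<in> F" using Dnz nz mb by auto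
        moreover have "min k b = k" "max k b = b" using ks sb by auto
        ultimately have "(k, b) \<in> F" by simp
        then have "k \<in> I" using Ilt sb unfolding F_def F1_def F2_def by fastforce
        then have "k = a" using indep[OF _ aI c(1) kc c(2)] by blast
        then show "k = a \<and> m = b" using mb by simp
      qed
      also have "\<dots> = Qs a c * Dm a b" using Qc[OF c(1)] Qj[OF sb] Ilt[OF aI] by simp
      finally have "Qs a c * Dm a b \<in> \<int>" using cd[of c b] c(1) assms(2) bn by simp
      then have "Qs a c \<in> \<int>" using Dab by (auto simp: minus_in_Ints_iff)
      then show False using assms(6) Ilt[OF aI] c by blast
    next
      case False
      then have "x \<in> F1" using xF F_def by auto
      then have aI: "a \<in> I" and bI: "b \<in> I" unfolding x F1_def by auto
      obtain c where c: "c < s" "Qs a c \<noteq> 0" using rownz[OF Ilt[OF aI]] by blast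
      obtain c' where c': "c' < s" "Qs b c' \<noteq> 0" using rownz[OF Ilt[OF bI]] by blast
      have "congr n Q Dm c c' = Q a c * Dm a b * Q b c'"
        unfolding congr_def
      proof (rule double_single)
        show "a < n" using Ilt[OF aI] assms(2) by simp
        show "b < n" using Ilt[OF bI] assms(2) by simp
        fix k m assume k: "k < n" and m: "m < n" and nz: "Q k c * Dm k m * Q m c' \<noteq> 0"
        have ks: "k < s" and kc: "Qs k c \<noteq> 0" using nz Qc[OF c(1)] by (auto split: if_splits)
        have ms: "m < s" and mc: "Qs m c' \<noteq> 0" using nz Qc[OF c'(1)] by (auto split: if_splits)
        have "(min k m, max k m) \<in> F" using Dnz nz by auto
        moreover have "max k m < s" using ks ms by auto
        ultimately have "min k m \<in> I \<and> max k m \<in> I" unfolding F_def F1_def F2_def by auto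
        then have "k \<in> I" "m \<in> I" by (auto simp: min_def max_def split: if_splits)
        then show "k = a \<and> m = b" using indep[OF _ aI c(1) kc c(2)] indep[OF _ bI c'(1) mc c'(2)] by blast
      qed
      also have "\<dots> = Qs a c * Dm a b * Qs b c'" using Qc[OF c(1)] Qc[OF c'(1)] Ilt[OF aI] Ilt[OF bI] by simp
      finally have "Qs a c * Dm a b * Qs b c' \<in> \<int>" using cd[of c c'] c(1) c'(1) assms(2) by simp
      then have "Qs a c * Qs b c' \<in> \<int>" using Dab by (auto simp: minus_in_Ints_iff)
      moreover have "Qs a c * Qs b c' \<notin> \<int>"
        by (rule prod_not_int) (use c c' entry_lt1 Ilt[OF aI] Ilt[OF bI] in auto)
      ultimately show False by blast
    qed
  qed
  have prob: "measure_pmf.prob (gnp n p) E \<le> max p (1 - p) ^ card F"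
    unfolding gnp_def by (rule prob_unique_bound[OF finD FD assms(7,8)]) (use uniq in blast)
  have m1: "1 \<le> m" using I(3) assms(1) unfolding m_def by (cases "card I") auto
  have cF1: "2 * card F1 + m = m * m" unfolding F1_def m_def by (rule card_upper_pairs[OF finI])
  have cF2: "card F2 = m * (n - s)" unfolding F2_def m_def by (simp add: card_cartesian_product)
  have cF: "card F = card F1 + card F2"
  proof -
    have "F1 \<subseteq> I \<times> I" unfolding F1_def by auto
    then have f1: "finite F1" using finI finite_subset by blast
    have f2: "finite F2" unfolding F2_def using finI by simp
    have "F1 \<inter> F2 = {}" unfolding F1_def F2_def using Ilt by fastforce
    then show ?thesis unfolding F_def using f1 f2 by (simp add: card_Un_disjoint)
  qed
  have rF: "real (card F) = (real m * real m - real m) / 2 + real m * (real n - real s)"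
  proof -
    have "real (2 * card F1 + m) = real (m * m)" using cF1 by simp
    then have "2 * real (card F1) = real m * real m - real m" by simp
    moreover have "real (card F2) = real m * (real n - real s)" using cF2 assms(2) by (simp add: of_nat_diff)
    ultimately show ?thesis using cF by simp
  qed
  define t where "t = real s / (2 * real l ^ 4)"
  have lpos: "0 < real l ^ 4" using l0 by simp
  have t0: "0 \<le> t" unfolding t_def by simp
  have tm: "t \<le> real m / 2"
  proof -
    have "real s \<le> real l ^ 4 * real m" using I(3) unfolding m_def by (metis of_nat_le_iff of_nat_mult of_nat_power)
    then show ?thesis unfolding t_def using lpos by (simp add: field_simps)
  qed
  have ineq: "t * (t + real n - real s - 1) \<le> real (card F)"
    unfolding rF by (rule final_ineq[OF m1 t0 tm assms(2)])
  define q where "q = max p (1 - p)"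
  have q: "0 < q" "q \<le> 1" unfolding q_def using assms(7,8) by auto
  have "q ^ card F = q powr real (card F)" using q by (simp add: powr_realpow)
  also have "\<dots> \<le> q powr (t * (t + real n - real s - 1))"
    by (rule powr_mono'[OF ineq]) (use q in auto)
  finally show ?thesis using prob unfolding E_def Q_def q_def t_def by simp
qed

end
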